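(* Let $(\mathcal{X},\mathcal{B},\lambda)$ be a measure space with $\lambda$ positive and $\sigma$-finite, and $P$ a probability measure on it with density $f\in\mathcal{L}^2(\mathcal{X},\lambda)$ with respect to $\lambda$. Let $X_1,\dots,X_N$ be i.i.d. with law $P$. Let $f_1,\dots,f_m\in\mathcal{L}^2$ with $D_k=\int f_k^2d\lambda>0$, and assume condition $\mathcal{H}(p)$ (see context) holds for some $p\in[1,+\infty]$. Then for every $\varepsilon>0$, $$P^{\otimes N}\left\{\forall k\in\{1,\dots,m\},\ \forall g\in\mathcal{L}^2,\ d^2(\Pi_{\mathcal{CR}_{k,\varepsilon}}g,f)\le d^2(g,f)-d^2(\Pi_{\mathcal{CR}_{k,\varepsilon}}g,g)\right\}\ge1-\varepsilon.$$
   Context: $d^2(g,h)=\int(g-h)^2d\lambda$ on $\mathcal{L}^2=\mathcal{L}^2(\mathcal{X},\lambda)$. $\hat\alpha_k=\frac{\frac1N\sum_{i=1}^Nf_k(X_i)}{D_k}$. $\mathcal{M}_k=\{\alpha f_k:\alpha\in\mathbb{R}\}$, $\Pi_{\mathcal{M}_k}$ the orthogonal projection onto it. Condition $\mathcal{H}(p)$: for $1<p<\infty$ with $\frac1p+\frac1q=1$, there are known constants $c,c_1,\dots,c_m>0$ with $(\int|f_k|^{2p}d\lambda)^{1/p}\le c_k\int f_k^2d\lambda$ for all $k$ and $(\int|f|^qd\lambda)^{1/q}\le c$; for $p=1$: $f\le c$ everywhere and $c_k=1$; for $p=\infty$: $|f_k|\le\sqrt{c_kD_k}$ everywhere and $c=1$.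 $C_k=c_kc$. $\beta(\varepsilon,k)=\frac{4[1+\log\frac{2m}{\varepsilon}]}{N}\left[\frac{\frac1N\sum_if_k(X_i)^2}{D_k}+C_k\right]$ and $\mathcal{CR}_{k,\varepsilon}=\{g\in\mathcal{L}^2:d^2(\hat\alpha_kf_k,\Pi_{\mathcal{M}_k}g)\le\beta(\varepsilon,k)\}$, a closed convex set; $\Pi_{\mathcal{CR}_{k,\varepsilon}}$ denotes the metric (nearest-point) projection onto it in $\mathcal{L}^2$. *)

theory Defs
  imports "HOL-Probability.Probability"
begin

definition L2 :: "'a measure \<Rightarrow> ('a \<Rightarrow> real) set" where
  "L2 M = {g. g \<in> borel_measurable M \<and> integrable M (\<lambda>x. (g x)\<^sup>2)}"

definition d2 :: "'a measure \<Rightarrow> ('a \<Rightarrow> real) \<Rightarrow> ('a \<Rightarrow> real) \<Rightarrow> real" where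
  "d2 M g h = (\<integral>x. (g x - h x)\<^sup>2 \<partial>M)"

definition Dk :: "'a measure \<Rightarrow> ('a \<Rightarrow> real) \<Rightarrow> real" where
  "Dk M fk = (\<integral>x. (fk x)\<^sup>2 \<partial>M)"

definition proj_line :: "'a measure \<Rightarrow> ('a \<Rightarrow> real) \<Rightarrow> ('a \<Rightarrow> real) \<Rightarrow> ('a \<Rightarrow> real)" where
  "proj_line M fk g = (\<lambda>x. ((\<integral>y. g y * fk y \<partial>M) / Dk M fk) * fk x)"

definition metric_proj :: "'a measure \<Rightarrow> ('a \<Rightarrow> real) set \<Rightarrow> ('a \<Rightarrow> real) \<Rightarrow> ('a \<Rightarrow> real)" where
  "metric_proj M C g = (SOME h. h \<in> C \<and> (\<forall>h'\<in>C. d2 M g h \<le> d2 M g h'))"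

definition alpha_hat :: "'a measure \<Rightarrow> ('a \<Rightarrow> real) \<Rightarrow> nat \<Rightarrow> (nat \<Rightarrow> 'a) \<Rightarrow> real" where
  "alpha_hat M fk N X = ((1 / real N) * (\<Sum>i\<in>{1..N}. fk (X i))) / Dk M fk"

text \<open>beta(eps,k), with C_k = c_k * c.\<close>
definition beta :: "'a measure \<Rightarrow> ('a \<Rightarrow> real) \<Rightarrow> nat \<Rightarrow> real \<Rightarrow> real \<Rightarrow> nat \<Rightarrow> (nat \<Rightarrow> 'a) \<Rightarrow> real" where
  "beta M fk m Ck eps N X =
     4 * (1 + ln (2 * real m / eps)) / real N *
     (((1 / real N) * (\<Sum>i\<in>{1..N}. (fk (X i))\<^sup>2)) / Dk M fk + Ck)"

definition CR :: "'a measure \<Rightarrow> ('a \<Rightarrow> real) \<Rightarrow> nat \<Rightarrow> real \<Rightarrow> real \<Rightarrow> nat \<Rightarrow> (nat \<Rightarrow> 'a)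
                 \<Rightarrow> ('a \<Rightarrow> real) set" where
  "CR M fk m Ck eps N X =
     {g \<in> L2 M. d2 M (\<lambda>x. alpha_hat M fk N X * fk x) (proj_line M fk g) \<le> beta M fk m Ck eps N X}"

definition cond_H :: "'a measure \<Rightarrow> ('a \<Rightarrow> real) \<Rightarrow> (nat \<Rightarrow> 'a \<Rightarrow> real) \<Rightarrow> nat
                      \<Rightarrow> ereal \<Rightarrow> real \<Rightarrow> (nat \<Rightarrow> real) \<Rightarrow> bool" where
  "cond_H M f fs m p c cs \<longleftrightarrow>
     c > 0 \<and> (\<forall>k\<in>{1..m}. cs k > 0) \<and>
     (if p = 1 then
        (\<forall>x\<in>space M. f x \<le> c) \<and> (\<forall>k\<in>{1..m}. cs k = 1)
      else if p = \<infinity> then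
        (\<forall>k\<in>{1..m}. \<forall>x\<in>space M. \<bar>fs k x\<bar> \<le> sqrt (cs k * Dk M (fs k))) \<and> c = 1
      else
        (let p' = real_of_ereal p; q = p' / (p' - 1) in
          (\<forall>k\<in>{1..m}. integrable M (\<lambda>x. \<bar>fs k x\<bar> powr (2 * p')) \<and>
              (\<integral>x. \<bar>fs k x\<bar> powr (2 * p') \<partial>M) powr (1 / p') \<le> cs k * Dk M (fs k)) \<and>
          integrable M (\<lambda>x. \<bar>f x\<bar> powr q) \<and>
          (\<integral>x. \<bar>f x\<bar> powr q \<partial>M) powr (1 / q) \<le> c))"

end

theory Submission
  imports Defs
begin

lemma L2_D: "g \<in> L2 M \<Longrightarrow> g \<in> borel_measurable M \<and> integrable M (\<lambda>x. (g x)\<^sup>2)"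
  by (simp add: L2_def)

lemma absb: "\<bar>(a::real) * b\<bar> \<le> a\<^sup>2 + b\<^sup>2"
proof -
  have "0 \<le> (\<bar>a\<bar> - \<bar>b\<bar>)\<^sup>2" by simp
  then have "2 * (\<bar>a\<bar> * \<bar>b\<bar>) \<le> \<bar>a\<bar>\<^sup>2 + \<bar>b\<bar>\<^sup>2" by (simp add: power2_diff)
  moreover have "0 \<le> \<bar>a\<bar> * \<bar>b\<bar>" by simp
  ultimately show ?thesis unfolding abs_mult power2_abs by linarith
qed

lemma L2_prod_integrable:
  assumes "g \<in> L2 M" "h \<in> L2 M"
  shows "integrable M (\<lambda>x. g x * h x)"
proof -
  have g: "g \<in> borel_measurable M" "integrable M (\<lambda>x. (g x)\<^sup>2)" and
       h: "h \<in> borel_measurable M" "integrable M (\<lambda>x. (h x)\<^sup>2)" using assms L2_D by auto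
  show ?thesis
  proof (rule Bochner_Integration.integrable_bound[of _ "\<lambda>x. (g x)\<^sup>2 + (h x)\<^sup>2"])
    show "integrable M (\<lambda>x. (g x)\<^sup>2 + (h x)\<^sup>2)" using g h by (intro Bochner_Integration.integrable_add)
    show "(\<lambda>x. g x * h x) \<in> borel_measurable M" using g h by auto
    show "AE x in M. norm (g x * h x) \<le> norm ((g x)\<^sup>2 + (h x)\<^sup>2)"
    proof (rule AE_I2)
      fix x
      have "\<bar>g x * h x\<bar> \<le> (g x)\<^sup>2 + (h x)\<^sup>2"
        by (rule absb)
      then show "norm (g x * h x) \<le> norm ((g x)\<^sup>2 + (h x)\<^sup>2)" by simp
    qed
  qed
qed

lemma L2_lin:
  assumes "g \<in> L2 M" "h \<in> L2 M"
  shows "(\<lambda>x. a * g x + b * h x) \<in> L2 M"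
proof -
  have g: "g \<in> borel_measurable M" "integrable M (\<lambda>x. (g x)\<^sup>2)" and
       h: "h \<in> borel_measurable M" "integrable M (\<lambda>x. (h x)\<^sup>2)" using assms L2_D by auto
  have gh: "integrable M (\<lambda>x. g x * h x)" using L2_prod_integrable assms by blast
  have eq: "(\<lambda>x. (a * g x + b * h x)\<^sup>2) = (\<lambda>x. a\<^sup>2 * (g x)\<^sup>2 + (2*a*b) * (g x * h x) + b\<^sup>2 * (h x)\<^sup>2)"
    by (simp add: fun_eq_iff power2_eq_square algebra_simps)
  have "integrable M (\<lambda>x. (a * g x + b * h x)\<^sup>2)" unfolding eq
    by (intro Bochner_Integration.integrable_add integrable_mult_right g h gh)
  moreover have "(\<lambda>x. a * g x + b * h x) \<in> borel_measurable M" using g h by auto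
  ultimately show ?thesis unfolding L2_def mem_Collect_eq by blast
qed

lemma L2_diff: "g \<in> L2 M \<Longrightarrow> h \<in> L2 M \<Longrightarrow> (\<lambda>x. g x - h x) \<in> L2 M"
  using L2_lin[of g M h 1 "-1"] by simp

lemma L2_add_smult: "g \<in> L2 M \<Longrightarrow> h \<in> L2 M \<Longrightarrow> (\<lambda>x. g x + t * h x) \<in> L2 M"
  using L2_lin[of g M h 1 t] by simp

lemma L2_smult: "h \<in> L2 M \<Longrightarrow> (\<lambda>x. t * h x) \<in> L2 M"
  using L2_lin[of h M h t 0] by simp

lemma sq_expand:
  assumes "u \<in> L2 M" "v \<in> L2 M"
  shows "(\<integral>x. (u x - t * v x)\<^sup>2 \<partial>M) = (\<integral>x. (u x)\<^sup>2 \<partial>M) - 2 * t * (\<integral>x. u x * v x \<partial>M) + t\<^sup>2 * (\<integral>x. (v x)\<^sup>2 \<partial>M)"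
proof -
  have u: "integrable M (\<lambda>x. (u x)\<^sup>2)" and v: "integrable M (\<lambda>x. (v x)\<^sup>2)" using assms L2_D by auto
  have uv: "integrable M (\<lambda>x. u x * v x)" using L2_prod_integrable assms by blast
  have eq: "(\<lambda>x. (u x - t * v x)\<^sup>2) = (\<lambda>x. (u x)\<^sup>2 - (2*t) * (u x * v x) + t\<^sup>2 * (v x)\<^sup>2)"
    by (auto simp: power2_eq_square algebra_simps)
  show ?thesis unfolding eq using u v uv by (simp add: integral_diff integral_add)
qed

lemma CS:
  assumes "u \<in> L2 M" "v \<in> L2 M" "(\<integral>x. (v x)\<^sup>2 \<partial>M) > 0"
  shows "(\<integral>x. u x * v x \<partial>M)\<^sup>2 \<le> (\<integral>x. (u x)\<^sup>2 \<partial>M) * (\<integral>x. (v x)\<^sup>2 \<partial>M)"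
proof -
  define A where "A = (\<integral>x. (u x)\<^sup>2 \<partial>M)"
  define B where "B = (\<integral>x. u x * v x \<partial>M)"
  define D where "D = (\<integral>x. (v x)\<^sup>2 \<partial>M)"
  have "0 \<le> (\<integral>x. (u x - (B/D) * v x)\<^sup>2 \<partial>M)" by simp
  also have "\<dots> = A - 2 * (B/D) * B + (B/D)\<^sup>2 * D" unfolding A_def B_def D_def by (rule sq_expand[OF assms(1,2)])
  also have "\<dots> = A - B\<^sup>2 / D" using assms(3) D_def by (simp add: field_simps power2_eq_square)
  finally have "B\<^sup>2 / D \<le> A" by simp
  then show ?thesis using assms(3) A_def B_def D_def by (simp add: field_simps)
qed

lemma d2_sym: "d2 M g h = d2 M h g"
  unfolding d2_def by (simp add: power2_commute)

lemma d2_self: "d2 M g g = 0" unfolding d2_def by simp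

lemma d2_nonneg: "d2 M g h \<ge> 0" unfolding d2_def by simp


definition cf :: "'a measure \<Rightarrow> ('a \<Rightarrow> real) \<Rightarrow> ('a \<Rightarrow> real) \<Rightarrow> real" where
  "cf M fk g = (\<integral>y. g y * fk y \<partial>M) / Dk M fk"

definition slab :: "'a measure \<Rightarrow> ('a \<Rightarrow> real) \<Rightarrow> real \<Rightarrow> real \<Rightarrow> ('a \<Rightarrow> real) set" where
  "slab M fk a b = {g \<in> L2 M. d2 M (\<lambda>x. a * fk x) (proj_line M fk g) \<le> b}"

lemma CR_slab: "CR M fk m Ck eps N X = slab M fk (alpha_hat M fk N X) (beta M fk m Ck eps N X)"
  unfolding CR_def slab_def by simp

lemma d2_line: "d2 M (\<lambda>x. a * fk x) (proj_line M fk g) = (a - cf M fk g)\<^sup>2 * Dk M fk"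
proof -
  have "(\<lambda>x. (a * fk x - proj_line M fk g x)\<^sup>2) = (\<lambda>x. (a - cf M fk g)\<^sup>2 * (fk x)\<^sup>2)"
    unfolding proj_line_def cf_def by (simp add: fun_eq_iff power2_eq_square algebra_simps)
  then show ?thesis unfolding d2_def Dk_def by simp
qed

lemma slab_iff: "g \<in> slab M fk a b \<longleftrightarrow> g \<in> L2 M \<and> (a - cf M fk g)\<^sup>2 * Dk M fk \<le> b"
  unfolding slab_def d2_line by simp

lemma int_diff_mult:
  assumes "g \<in> L2 M" "h \<in> L2 M" "fk \<in> L2 M"
  shows "(\<integral>x. (g x - h x) * fk x \<partial>M) = (\<integral>x. g x * fk x \<partial>M) - (\<integral>x. h x * fk x \<partial>M)"
proof -
  have "(\<lambda>x. (g x - h x) * fk x) = (\<lambda>x. g x * fk x - h x * fk x)" by (simp add: fun_eq_iff algebra_simps)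
  then show ?thesis using L2_prod_integrable[OF assms(1,3)] L2_prod_integrable[OF assms(2,3)]
    by (simp add: integral_diff)
qed

lemma cf_lin:
  assumes "g \<in> L2 M" "h \<in> L2 M" "fk \<in> L2 M"
  shows "cf M fk (\<lambda>x. g x + t * h x) = cf M fk g + t * cf M fk h"
proof -
  have "(\<lambda>x. (g x + t * h x) * fk x) = (\<lambda>x. g x * fk x + t * (h x * fk x))" by (simp add: fun_eq_iff algebra_simps)
  then have "(\<integral>x. (g x + t * h x) * fk x \<partial>M) = (\<integral>x. g x * fk x \<partial>M) + t * (\<integral>x. h x * fk x \<partial>M)"
    using L2_prod_integrable[OF assms(1,3)] L2_prod_integrable[OF assms(2,3)]
    by (simp add: integral_add)
  then show ?thesis unfolding cf_def by (simp add: add_divide_distrib)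
qed

lemma cf_self: assumes "Dk M fk > 0" shows "cf M fk fk = 1"
proof -
  have "(\<lambda>y. fk y * fk y) = (\<lambda>y. (fk y)\<^sup>2)" by (simp add: fun_eq_iff power2_eq_square)
  then show ?thesis using assms unfolding cf_def Dk_def by simp
qed

lemma sq_convex: "0 \<le> t \<Longrightarrow> t \<le> 1 \<Longrightarrow> ((1 - t) * A + t * B)\<^sup>2 \<le> (1 - t) * A\<^sup>2 + t * (B::real)\<^sup>2"
proof -
  assume "0 \<le> t" "t \<le> 1"
  then have "0 \<le> t * (1 - t) * (A - B)\<^sup>2" by simp
  moreover have "(1 - t) * A\<^sup>2 + t * B\<^sup>2 - ((1 - t) * A + t * B)\<^sup>2 = t * (1 - t) * (A - B)\<^sup>2"
    by (simp add: power2_eq_square algebra_simps)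
  ultimately show ?thesis by linarith
qed

lemma slab_convex:
  assumes "h \<in> slab M fk a b" "f \<in> slab M fk a b" "fk \<in> L2 M" "Dk M fk \<ge> 0" "0 \<le> t" "t \<le> 1"
  shows "(\<lambda>x. h x + t * (f x - h x)) \<in> slab M fk a b"
proof -
  have h: "h \<in> L2 M" "(a - cf M fk h)\<^sup>2 * Dk M fk \<le> b" and f: "f \<in> L2 M" "(a - cf M fk f)\<^sup>2 * Dk M fk \<le> b"
    using assms(1,2) unfolding slab_iff by auto
  have fh: "(\<lambda>x. f x - h x) \<in> L2 M" using L2_diff f h by blast
  have cfd: "cf M fk (\<lambda>x. f x - h x) = cf M fk f - cf M fk h"
    using cf_lin[OF f(1) h(1) assms(3), of "-1"] by simp
  have c: "cf M fk (\<lambda>x. h x + t * (f x - h x)) = cf M fk h + t * (cf M fk f - cf M fk h)"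
    using cf_lin[OF h(1) fh assms(3)] cfd by simp
  have "a - (cf M fk h + t * (cf M fk f - cf M fk h)) = (1 - t) * (a - cf M fk h) + t * (a - cf M fk f)"
    by (simp add: algebra_simps)
  then have "(a - cf M fk (\<lambda>x. h x + t * (f x - h x)))\<^sup>2 \<le> (1 - t) * (a - cf M fk h)\<^sup>2 + t * (a - cf M fk f)\<^sup>2"
    using c sq_convex[OF assms(5,6)] by simp
  then have "(a - cf M fk (\<lambda>x. h x + t * (f x - h x)))\<^sup>2 * Dk M fk \<le> ((1 - t) * (a - cf M fk h)\<^sup>2 + t * (a - cf M fk f)\<^sup>2) * Dk M fk"
    using assms(4) by (rule mult_right_mono)
  also have "\<dots> = (1 - t) * ((a - cf M fk h)\<^sup>2 * Dk M fk) + t * ((a - cf M fk f)\<^sup>2 * Dk M fk)"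
    by (simp add: algebra_simps)
  also have "\<dots> \<le> (1 - t) * b + t * b"
    using h(2) f(2) assms(5,6) by (intro add_mono mult_left_mono) auto
  also have "\<dots> = b" by (simp add: algebra_simps)
  finally show ?thesis using L2_add_smult[OF h(1) fh] slab_iff by blast
qed


lemma slab_nearest_exists:
  assumes fk: "fk \<in> L2 M" and D: "Dk M fk > 0" and b: "b \<ge> 0" and g: "g \<in> L2 M"
  shows "\<exists>h. h \<in> slab M fk a b \<and> (\<forall>h'\<in>slab M fk a b. d2 M g h \<le> d2 M g h')"
proof -
  define D where "D = Dk M fk"
  define cg where "cg = cf M fk g"
  define r where "r = sqrt (b / D)"
  define cl where "cl = max (a - r) (min (a + r) cg)"
  define P where "P = (\<lambda>x. g x + (cl - cg) * fk x)"
  have r: "r \<ge> 0" "r\<^sup>2 = b / D" using b D unfolding r_def D_def by auto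
  have PL2: "P \<in> L2 M" unfolding P_def using L2_add_smult[OF g fk] by blast
  have cfP: "cf M fk P = cl" unfolding P_def using cf_lin[OF g fk fk] cf_self[OF D] cg_def by simp
  have "\<bar>a - cl\<bar> \<le> r" unfolding cl_def using r by auto
  then have "(a - cl)\<^sup>2 \<le> r\<^sup>2" using r by (metis abs_le_square_iff abs_of_nonneg)
  then have "(a - cl)\<^sup>2 * D \<le> b" using r D unfolding D_def by (simp add: field_simps)
  then have Pin: "P \<in> slab M fk a b" unfolding slab_iff using PL2 cfP D_def by simp
  have dP: "d2 M g P = (cg - cl)\<^sup>2 * D"
  proof -
    have "(\<lambda>x. (g x - P x)\<^sup>2) = (\<lambda>x. (cg - cl)\<^sup>2 * (fk x)\<^sup>2)"
      unfolding P_def by (simp add: fun_eq_iff power2_eq_square algebra_simps)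
    then show ?thesis unfolding d2_def D_def Dk_def by simp
  qed
  have near: "d2 M g P \<le> d2 M g h'" if h': "h' \<in> slab M fk a b" for h'
  proof -
    have h'L: "h' \<in> L2 M" and h'c: "(a - cf M fk h')\<^sup>2 * D \<le> b" using h' unfolding slab_iff D_def by auto
    define u where "u = (\<lambda>x. g x - h' x)"
    have uL: "u \<in> L2 M" unfolding u_def using L2_diff[OF g h'L] .
    have ufk: "(\<integral>x. u x * fk x \<partial>M) = D * (cg - cf M fk h')"
    proof -
      have e1: "(\<integral>x. g x * fk x \<partial>M) = D * cg" unfolding cg_def cf_def D_def using D by simp
      have e2: "(\<integral>x. h' x * fk x \<partial>M) = D * cf M fk h'" unfolding cf_def D_def using D by simp
      show ?thesis unfolding u_def int_diff_mult[OF g h'L fk] e1 e2 by (simp add: algebra_simps)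
    qed
    have cs: "(\<integral>x. u x * fk x \<partial>M)\<^sup>2 \<le> (\<integral>x. (u x)\<^sup>2 \<partial>M) * D"
      using CS[OF uL fk] D unfolding D_def Dk_def by simp
    then have "D\<^sup>2 * (cg - cf M fk h')\<^sup>2 \<le> (\<integral>x. (u x)\<^sup>2 \<partial>M) * D" using ufk by (simp add: power_mult_distrib)
    then have A: "D * (cg - cf M fk h')\<^sup>2 \<le> (\<integral>x. (u x)\<^sup>2 \<partial>M)" using D unfolding D_def
      by (simp add: power2_eq_square mult.assoc mult_le_cancel_left_pos)
    have Dp: "D > 0" using D unfolding D_def .
    have "D * r\<^sup>2 = b" using r Dp by simp
    then have "D * (a - cf M fk h')\<^sup>2 \<le> D * r\<^sup>2" using h'c by (simp add: mult.commute)
    then have "(a - cf M fk h')\<^sup>2 \<le> r\<^sup>2" using Dp by (simp add: mult_le_cancel_left_pos)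
    then have "\<bar>a - cf M fk h'\<bar> \<le> r" using r by (metis abs_le_square_iff abs_of_nonneg)
    then have "\<bar>cg - cl\<bar> \<le> \<bar>cg - cf M fk h'\<bar>" unfolding cl_def by auto
    then have "(cg - cl)\<^sup>2 \<le> (cg - cf M fk h')\<^sup>2" by (metis abs_le_square_iff)
    then have "(cg - cl)\<^sup>2 * D \<le> D * (cg - cf M fk h')\<^sup>2" using D unfolding D_def by (simp add: mult.commute)
    with A have "(cg - cl)\<^sup>2 * D \<le> d2 M g h'" unfolding d2_def u_def by simp
    then show ?thesis by (simp only: dP)
  qed
  show ?thesis using Pin near by blast
qed

lemma mp_props:
  assumes fk: "fk \<in> L2 M" and D: "Dk M fk > 0" and b: "b \<ge> 0" and g: "g \<in> L2 M"
  shows "metric_proj M (slab M fk a b) g \<in> slab M fk a b \<and>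
         (\<forall>h'\<in>slab M fk a b. d2 M g (metric_proj M (slab M fk a b) g) \<le> d2 M g h')"
  unfolding metric_proj_def using someI_ex[OF slab_nearest_exists[OF assms]] .

lemma ineq_aux:
  assumes "\<And>t. 0 < t \<Longrightarrow> t \<le> 1 \<Longrightarrow> 2 * t * a \<le> t\<^sup>2 * (b::real)" "b \<ge> 0"
  shows "a \<le> 0"
proof (rule ccontr)
  assume "\<not> a \<le> 0"
  then have a: "a > 0" by simp
  show False
  proof (cases "a \<le> b")
    case True
    then have b: "b > 0" using a by simp
    have "2 * (a/b) * a \<le> (a/b)\<^sup>2 * b" using assms(1)[of "a/b"] a b True by simp
    then have "2 * a * a \<le> a * a" using b by (simp add: power2_eq_square field_simps)
    then show False using a by (simp add: mult_le_cancel_right)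
  next
    case False
    then show False using assms(1)[of 1] a by simp
  qed
qed

lemma proj_ineq:
  assumes fk: "fk \<in> L2 M" and D: "Dk M fk > 0" and b: "b \<ge> 0" and g: "g \<in> L2 M"
    and f: "f \<in> slab M fk a b"
  shows "d2 M (metric_proj M (slab M fk a b) g) f \<le> d2 M g f - d2 M (metric_proj M (slab M fk a b) g) g"
proof -
  define h where "h = metric_proj M (slab M fk a b) g"
  have hC: "h \<in> slab M fk a b" and near: "\<And>h'. h' \<in> slab M fk a b \<Longrightarrow> d2 M g h \<le> d2 M g h'"
    using mp_props[OF fk D b g] unfolding h_def by auto
  have hL: "h \<in> L2 M" and fL: "f \<in> L2 M" using hC f unfolding slab_iff by auto
  define u where "u = (\<lambda>x. g x - h x)"
  define v where "v = (\<lambda>x. f x - h x)"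
  have uL: "u \<in> L2 M" unfolding u_def using L2_diff[OF g hL] .
  have vL: "v \<in> L2 M" unfolding v_def using L2_diff[OF fL hL] .
  define A where "A = (\<integral>x. (u x)\<^sup>2 \<partial>M)"
  define B where "B = (\<integral>x. u x * v x \<partial>M)"
  define C where "C = (\<integral>x. (v x)\<^sup>2 \<partial>M)"
  have "2 * t * B \<le> t\<^sup>2 * C" if t: "0 < t" "t \<le> 1" for t
  proof -
    have "(\<lambda>x. h x + t * (f x - h x)) \<in> slab M fk a b"
      using slab_convex[OF hC f fk] D t by simp
    then have "d2 M g h \<le> d2 M g (\<lambda>x. h x + t * (f x - h x))" by (rule near)
    moreover have "d2 M g (\<lambda>x. h x + t * (f x - h x)) = A - 2 * t * B + t\<^sup>2 * C"
    proof -
      have "(\<lambda>x. (g x - (h x + t * (f x - h x)))\<^sup>2) = (\<lambda>x. (u x - t * v x)\<^sup>2)"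
        unfolding u_def v_def by (simp add: fun_eq_iff algebra_simps)
      then show ?thesis unfolding d2_def A_def B_def C_def using sq_expand[OF uL vL] by simp
    qed
    moreover have "d2 M g h = A" unfolding d2_def A_def u_def ..
    ultimately show ?thesis by simp
  qed
  then have B: "B \<le> 0" using ineq_aux[of B C] C_def by simp
  have "d2 M g f = A - 2 * 1 * B + 1\<^sup>2 * C"
  proof -
    have "(\<lambda>x. (g x - f x)\<^sup>2) = (\<lambda>x. (u x - 1 * v x)\<^sup>2)"
      unfolding u_def v_def by (simp add: fun_eq_iff algebra_simps)
    then show ?thesis unfolding d2_def A_def B_def C_def using sq_expand[OF uL vL, of 1] by simp
  qed
  moreover have "d2 M h f = C" unfolding d2_def C_def v_def by (simp add: power2_commute)
  moreover have "d2 M h g = A" unfolding d2_def A_def u_def by (simp add: power2_commute)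
  ultimately show ?thesis unfolding h_def[symmetric] using B by simp
qed

lemma event_iff:
  assumes fk: "fk \<in> L2 M" and D: "Dk M fk > 0" and b: "b \<ge> 0" and fL: "f \<in> L2 M"
  shows "(\<forall>g\<in>L2 M. d2 M (metric_proj M (slab M fk a b) g) f \<le> d2 M g f - d2 M (metric_proj M (slab M fk a b) g) g)
     \<longleftrightarrow> f \<in> slab M fk a b"
proof
  assume f: "f \<in> slab M fk a b"
  show "\<forall>g\<in>L2 M. d2 M (metric_proj M (slab M fk a b) g) f \<le> d2 M g f - d2 M (metric_proj M (slab M fk a b) g) g"
    using proj_ineq[OF fk D b _ f] by blast
next
  assume H: "\<forall>g\<in>L2 M. d2 M (metric_proj M (slab M fk a b) g) f \<le> d2 M g f - d2 M (metric_proj M (slab M fk a b) g) g"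
  define h where "h = metric_proj M (slab M fk a b) f"
  have hC: "h \<in> slab M fk a b" using mp_props[OF fk D b fL] unfolding h_def by auto
  have hL: "h \<in> L2 M" using hC unfolding slab_iff by auto
  have "d2 M h f \<le> d2 M f f - d2 M h f" using H fL unfolding h_def by blast
  then have "d2 M h f \<le> 0" using d2_self[of M f] by simp
  define u where "u = (\<lambda>x. h x - f x)"
  have uL: "u \<in> L2 M" unfolding u_def using L2_diff[OF hL fL] .
  have u0: "(\<integral>x. (u x)\<^sup>2 \<partial>M) \<le> 0" using \<open>d2 M h f \<le> 0\<close> unfolding d2_def u_def .
  have "(\<integral>x. u x * fk x \<partial>M)\<^sup>2 \<le> (\<integral>x. (u x)\<^sup>2 \<partial>M) * Dk M fk"
    using CS[OF uL fk] D unfolding Dk_def by simp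
  also have "\<dots> \<le> 0" using u0 D by (simp add: mult_nonpos_nonneg)
  finally have "(\<integral>x. u x * fk x \<partial>M) = 0" by simp
  then have "cf M fk h = cf M fk f" using int_diff_mult[OF hL fL fk] unfolding u_def cf_def by simp
  then show "f \<in> slab M fk a b" using hC fL unfolding slab_iff by simp
qed

lemma exp_quad: "exp (x - x\<^sup>2/2) \<le> 1 + x + x\<^sup>2/(2::real)"
proof -
  define \<phi> where "\<phi> = (\<lambda>x::real. (1 + x + x\<^sup>2/2) * exp (- x + x\<^sup>2/2))"
  have d: "DERIV \<phi> x :> exp (- x + x\<^sup>2/2) * (x * (1 + x/2 + x\<^sup>2/2))" for x
  proof -
    have "DERIV \<phi> x :> (1 + x) * exp (- x + x\<^sup>2/2) + (1 + x + x\<^sup>2/2) * (exp (- x + x\<^sup>2/2) * (-1 + x))"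
      unfolding \<phi>_def by (auto intro!: derivative_eq_intros)
    moreover have "(1 + x) * exp (- x + x\<^sup>2/2) + (1 + x + x\<^sup>2/2) * (exp (- x + x\<^sup>2/2) * (-1 + x))
        = exp (- x + x\<^sup>2/2) * (x * (1 + x/2 + x\<^sup>2/2))"
      by (simp add: algebra_simps power2_eq_square power3_eq_cube)
    ultimately show ?thesis by simp
  qed
  have pos: "1 + z/2 + z\<^sup>2/2 > 0" for z :: real
  proof -
    have "1 + z/2 + z\<^sup>2/2 = ((z + 1/2)\<^sup>2 + 7/4) / 2" by (simp add: power2_eq_square field_simps)
    also have "\<dots> > 0" by (simp add: add_nonneg_pos)
    finally show ?thesis .
  qed
  have cont: "continuous_on S \<phi>" for S
    using d by (meson DERIV_isCont continuous_at_imp_continuous_on)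
  have "\<phi> 0 \<le> \<phi> x"
  proof (cases "x \<ge> 0")
    case True
    show ?thesis
    proof (rule DERIV_nonneg_imp_increasing_open[OF True _ cont])
      fix z :: real assume "0 < z" "z < x"
      then show "\<exists>y. DERIV \<phi> z :> y \<and> y \<ge> 0" using d pos[of z] by (intro exI[of _ "exp (- z + z\<^sup>2/2) * (z * (1 + z/2 + z\<^sup>2/2))"]) auto
    qed
  next
    case False
    then have "x \<le> 0" by simp
    show ?thesis
    proof (rule DERIV_nonpos_imp_decreasing_open[OF \<open>x \<le> 0\<close> _ cont])
      fix z :: real assume "x < z" "z < 0"
      then have "z * (1 + z/2 + z\<^sup>2/2) \<le> 0" using pos[of z] by (simp add: mult_nonpos_nonneg)
      then show "\<exists>y. DERIV \<phi> z :> y \<and> y \<le> 0" using d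
        by (intro exI[of _ "exp (- z + z\<^sup>2/2) * (z * (1 + z/2 + z\<^sup>2/2))"]) (auto simp: mult_nonneg_nonpos)
    qed
  qed
  then have "1 \<le> (1 + x + x\<^sup>2/2) * exp (- x + x\<^sup>2/2)" unfolding \<phi>_def by simp
  then have "exp (x - x\<^sup>2/2) * 1 \<le> exp (x - x\<^sup>2/2) * ((1 + x + x\<^sup>2/2) * exp (- x + x\<^sup>2/2))"
    by (intro mult_left_mono) auto
  also have "\<dots> = 1 + x + x\<^sup>2/2" by (simp add: exp_add[symmetric])
  finally show ?thesis by simp
qed

lemma one_factor:
  assumes P: "prob_space P" and Zm: "Z \<in> borel_measurable P" and Z2: "integrable P (\<lambda>z. (Z z)\<^sup>2)"
  shows "(\<integral>\<^sup>+ z. ennreal (exp (t * (Z z - (\<integral>z. Z z \<partial>P)) - t\<^sup>2 * ((Z z)\<^sup>2 + (\<integral>z. (Z z)\<^sup>2 \<partial>P)) / 2)) \<partial>P) \<le> 1"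
proof -
  interpret P: prob_space P by fact
  define \<mu> where "\<mu> = (\<integral>z. Z z \<partial>P)"
  define e where "e = (\<integral>z. (Z z)\<^sup>2 \<partial>P)"
  have Z1: "integrable P Z" using P.square_integrable_imp_integrable[OF Zm Z2] .
  define c where "c = exp (- t * \<mu> - t\<^sup>2 * e / 2)"
  have c: "c > 0" unfolding c_def by simp
  have pw: "exp (t * (Z z - \<mu>) - t\<^sup>2 * ((Z z)\<^sup>2 + e) / 2) \<le> c * (1 + t * Z z + t\<^sup>2 * (Z z)\<^sup>2 / 2)" for z
  proof -
    have "exp (t * (Z z - \<mu>) - t\<^sup>2 * ((Z z)\<^sup>2 + e) / 2) = c * exp (t * Z z - (t * Z z)\<^sup>2 / 2)"
      unfolding c_def by (simp add: exp_add[symmetric] power_mult_distrib algebra_simps)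
    also have "\<dots> \<le> c * (1 + t * Z z + (t * Z z)\<^sup>2 / 2)"
      using exp_quad[of "t * Z z"] c by (intro mult_left_mono) auto
    finally show ?thesis by (simp add: power_mult_distrib)
  qed
  have G: "integrable P (\<lambda>z. c * (1 + t * Z z + t\<^sup>2 * (Z z)\<^sup>2 / 2))"
    using Z1 Z2 by auto
  have Gnn: "0 \<le> c * (1 + t * Z z + t\<^sup>2 * (Z z)\<^sup>2 / 2)" for z
  proof -
    have "1 + t * Z z + t\<^sup>2 * (Z z)\<^sup>2 / 2 = ((t * Z z + 1)\<^sup>2 + 1) / 2" by (simp add: power2_eq_square field_simps)
    also have "\<dots> \<ge> 0" by simp
    finally show ?thesis using c by simp
  qed
  have "(\<integral>\<^sup>+ z. ennreal (exp (t * (Z z - \<mu>) - t\<^sup>2 * ((Z z)\<^sup>2 + e) / 2)) \<partial>P)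
      \<le> (\<integral>\<^sup>+ z. ennreal (c * (1 + t * Z z + t\<^sup>2 * (Z z)\<^sup>2 / 2)) \<partial>P)"
    using pw by (intro nn_integral_mono) (simp add: ennreal_leI)
  also have "\<dots> = ennreal (\<integral>z. c * (1 + t * Z z + t\<^sup>2 * (Z z)\<^sup>2 / 2) \<partial>P)"
    using G Gnn by (intro nn_integral_eq_integral) auto
  also have "\<dots> \<le> ennreal 1"
  proof (rule ennreal_leI)
    have "(\<integral>z. c * (1 + t * Z z + t\<^sup>2 * (Z z)\<^sup>2 / 2) \<partial>P) = c * (1 + t * \<mu> + t\<^sup>2 * e / 2)"
      using Z1 Z2 unfolding \<mu>_def e_def by (simp add: integral_add P.prob_space)
    also have "c * (1 + t * \<mu> + t\<^sup>2 * e / 2) \<le> c * exp (t * \<mu> + t\<^sup>2 * e / 2)"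
      using c by (intro mult_left_mono) (auto simp: add.assoc exp_ge_add_one_self)
    also have "c * exp (t * \<mu> + t\<^sup>2 * e / 2) = 1" unfolding c_def by (simp add: exp_add[symmetric])
    finally show "(\<integral>z. c * (1 + t * Z z + t\<^sup>2 * (Z z)\<^sup>2 / 2) \<partial>P) \<le> 1" .
  qed
  finally show ?thesis unfolding \<mu>_def e_def by simp
qed


lemma prod_bound:
  assumes P: "prob_space P" and Zm[measurable]: "Z \<in> borel_measurable P" and Z2: "integrable P (\<lambda>z. (Z z)\<^sup>2)"
    and I: "finite I"
  shows "(\<integral>\<^sup>+ X. ennreal (exp (t * ((\<Sum>i\<in>I. Z (X i)) - real (card I) * (\<integral>z. Z z \<partial>P))
            - t\<^sup>2 * ((\<Sum>i\<in>I. (Z (X i))\<^sup>2) + real (card I) * (\<integral>z. (Z z)\<^sup>2 \<partial>P)) / 2)) \<partial>PiM I (\<lambda>_. P)) \<le> 1"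
proof -
  interpret P: prob_space P by fact
  interpret PS: product_sigma_finite "\<lambda>_::'b. P"
    by (simp add: product_sigma_finite_def P.sigma_finite_measure_axioms)
  define \<mu> where "\<mu> = (\<integral>z. Z z \<partial>P)"
  define e where "e = (\<integral>z. (Z z)\<^sup>2 \<partial>P)"
  define F where "F = (\<lambda>z. t * Z z - t * \<mu> - (t\<^sup>2 / 2) * (Z z)\<^sup>2 - (t\<^sup>2 / 2) * e)"
  have Fm[measurable]: "F \<in> borel_measurable P" unfolding F_def by measurable
  have sumF: "(\<Sum>i\<in>I. F (X i)) = t * ((\<Sum>i\<in>I. Z (X i)) - real (card I) * \<mu>)
            - t\<^sup>2 * ((\<Sum>i\<in>I. (Z (X i))\<^sup>2) + real (card I) * e) / 2" for X
  proof -
    have "(\<Sum>i\<in>I. F (X i)) = t * (\<Sum>i\<in>I. Z (X i)) - real (card I) * (t * \<mu>) - (t\<^sup>2 / 2) * (\<Sum>i\<in>I. (Z (X i))\<^sup>2) - real (card I) * ((t\<^sup>2 / 2) * e)"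
      unfolding F_def by (simp add: sum_subtractf sum_distrib_left)
    then show ?thesis by (simp add: field_simps)
  qed
  have "(\<integral>\<^sup>+ X. ennreal (exp (t * ((\<Sum>i\<in>I. Z (X i)) - real (card I) * \<mu>)
            - t\<^sup>2 * ((\<Sum>i\<in>I. (Z (X i))\<^sup>2) + real (card I) * e) / 2)) \<partial>PiM I (\<lambda>_. P))
      = (\<integral>\<^sup>+ X. (\<Prod>i\<in>I. ennreal (exp (F (X i)))) \<partial>PiM I (\<lambda>_. P))"
    by (simp add: sumF[symmetric] exp_sum[OF I] prod_ennreal)
  also have "\<dots> = (\<Prod>i\<in>I. (\<integral>\<^sup>+ z. ennreal (exp (F z)) \<partial>P))"
    by (rule PS.product_nn_integral_prod[OF I]) measurable
  also have "\<dots> \<le> (\<Prod>i\<in>I. (1::ennreal))"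
  proof (rule prod_mono_ennreal)
    fix i assume "i \<in> I"
    have "(\<integral>\<^sup>+ z. ennreal (exp (F z)) \<partial>P) \<le> 1"
    proof -
      have "F = (\<lambda>z. t * (Z z - \<mu>) - t\<^sup>2 * ((Z z)\<^sup>2 + e) / 2)" unfolding F_def by (simp add: fun_eq_iff field_simps)
      then show ?thesis unfolding \<mu>_def e_def using one_factor[OF P Zm Z2] by simp
    qed
    then show "(\<integral>\<^sup>+ z. ennreal (exp (F z)) \<partial>P) \<le> 1" by simp
  qed
  also have "\<dots> = 1" by simp
  finally show ?thesis unfolding \<mu>_def e_def .
qed

lemma nd_form: "a > 0 \<Longrightarrow> normal_density m (1 / sqrt a) t = sqrt (a / (2 * pi)) * exp (- (t - m)\<^sup>2 * a / 2)"
  unfolding normal_density_def by (simp add: power_divide real_sqrt_divide field_simps)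

lemma mixture:
  assumes V: "V \<ge> 0" and y: "y > 0"
  shows "(\<integral>\<^sup>+ t. ennreal (exp (t * S - t\<^sup>2 * V / 2) * normal_density 0 (1 / sqrt y) t) \<partial>lborel)
       = ennreal (sqrt (y / (V + y)) * exp (S\<^sup>2 / (2 * (V + y))))"
proof -
  define W where "W = V + y"
  have W: "W > 0" unfolding W_def using V y by simp
  define K where "K = sqrt (y / W) * exp (S\<^sup>2 / (2 * W))"
  have K: "K \<ge> 0" unfolding K_def using W y by simp
  have pw: "exp (t * S - t\<^sup>2 * V / 2) * normal_density 0 (1 / sqrt y) t = K * normal_density (S / W) (1 / sqrt W) t" for t
  proof -
    have e1: "t * S - t\<^sup>2 * V / 2 + (- (t - 0)\<^sup>2 * y / 2) = t * S - t\<^sup>2 * W / 2"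
      unfolding W_def by (simp add: algebra_simps)
    have "(t - S / W)\<^sup>2 * W = t\<^sup>2 * W - 2 * t * S + S\<^sup>2 / W"
      using W by (simp add: field_simps power2_eq_square)
    then have e2: "S\<^sup>2 / (2 * W) + (- (t - S / W)\<^sup>2 * W / 2) = t * S - t\<^sup>2 * W / 2"
      by (simp add: field_simps)
    have e: "t * S - t\<^sup>2 * V / 2 + (- (t - 0)\<^sup>2 * y / 2) = S\<^sup>2 / (2 * W) + (- (t - S / W)\<^sup>2 * W / 2)"
      using e1 e2 by simp
    have c: "sqrt (y / (2 * pi)) = sqrt (y / W) * sqrt (W / (2 * pi))"
      using W by (simp add: real_sqrt_mult[symmetric])
    show ?thesis unfolding nd_form[OF y] nd_form[OF W] K_def
      using e c by (simp add: exp_add[symmetric] algebra_simps)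
  qed
  have "(\<integral>\<^sup>+ t. ennreal (exp (t * S - t\<^sup>2 * V / 2) * normal_density 0 (1 / sqrt y) t) \<partial>lborel)
      = (\<integral>\<^sup>+ t. ennreal K * ennreal (normal_density (S / W) (1 / sqrt W) t) \<partial>lborel)"
    using K by (simp add: pw ennreal_mult normal_density_nonneg)
  also have "\<dots> = ennreal K * (\<integral>\<^sup>+ t. ennreal (normal_density (S / W) (1 / sqrt W) t) \<partial>lborel)"
    by (rule nn_integral_cmult) measurable
  also have "(\<integral>\<^sup>+ t. ennreal (normal_density (S / W) (1 / sqrt W) t) \<partial>lborel) = 1"
    using nn_integral_eq_integral[OF integrable_normal_density[of "1 / sqrt W" "S / W"]]
      integral_normal_density[of "1 / sqrt W" "S / W"] normal_density_nonneg[of "S / W" "1 / sqrt W"] W by simp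
  finally show ?thesis unfolding K_def W_def by simp
qed


lemma mixture_bound:
  assumes Q: "prob_space Q" and Sm[measurable]: "S \<in> borel_measurable Q" and Vm[measurable]: "V \<in> borel_measurable Q"
    and V0: "\<And>X. X \<in> space Q \<Longrightarrow> V X \<ge> 0" and y: "y > 0"
    and H: "\<And>t. (\<integral>\<^sup>+ X. ennreal (exp (t * S X - t\<^sup>2 * V X / 2)) \<partial>Q) \<le> 1"
  shows "(\<integral>\<^sup>+ X. ennreal (sqrt (y / (V X + y)) * exp ((S X)\<^sup>2 / (2 * (V X + y)))) \<partial>Q) \<le> 1"
proof -
  interpret Q: prob_space Q by fact
  interpret LQ: pair_sigma_finite lborel Q
    by (simp add: pair_sigma_finite_def lborel.sigma_finite_measure_axioms Q.sigma_finite_measure_axioms)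
  define nd where "nd = normal_density 0 (1 / sqrt y)"
  have nd0: "nd t \<ge> 0" for t unfolding nd_def by (simp add: normal_density_nonneg)
  have "(\<integral>\<^sup>+ X. ennreal (sqrt (y / (V X + y)) * exp ((S X)\<^sup>2 / (2 * (V X + y)))) \<partial>Q)
      = (\<integral>\<^sup>+ X. (\<integral>\<^sup>+ t. ennreal (exp (t * S X - t\<^sup>2 * V X / 2) * nd t) \<partial>lborel) \<partial>Q)"
    by (rule nn_integral_cong) (simp add: mixture V0 y nd_def)
  also have "\<dots> = (\<integral>\<^sup>+ t. (\<integral>\<^sup>+ X. ennreal (exp (t * S X - t\<^sup>2 * V X / 2) * nd t) \<partial>Q) \<partial>lborel)"
    unfolding nd_def by (rule LQ.Fubini') measurable
  also have "\<dots> \<le> (\<integral>\<^sup>+ t. ennreal (nd t) \<partial>lborel)"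
  proof (rule nn_integral_mono)
    fix t
    have "(\<integral>\<^sup>+ X. ennreal (exp (t * S X - t\<^sup>2 * V X / 2) * nd t) \<partial>Q)
        = (\<integral>\<^sup>+ X. ennreal (nd t) * ennreal (exp (t * S X - t\<^sup>2 * V X / 2)) \<partial>Q)"
      using nd0[of t] by (simp add: ennreal_mult mult.commute)
    also have "\<dots> = ennreal (nd t) * (\<integral>\<^sup>+ X. ennreal (exp (t * S X - t\<^sup>2 * V X / 2)) \<partial>Q)"
      by (rule nn_integral_cmult) measurable
    also have "\<dots> \<le> ennreal (nd t) * 1" using H[of t] by (intro mult_left_mono) auto
    finally show "(\<integral>\<^sup>+ X. ennreal (exp (t * S X - t\<^sup>2 * V X / 2) * nd t) \<partial>Q) \<le> ennreal (nd t)" by simp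
  qed
  also have "(\<integral>\<^sup>+ t. ennreal (nd t) \<partial>lborel) = 1"
    unfolding nd_def
    using nn_integral_eq_integral[OF integrable_normal_density[of "1 / sqrt y" 0]]
      integral_normal_density[of "1 / sqrt y" 0] normal_density_nonneg[of 0 "1 / sqrt y"] y by simp
  finally show ?thesis .
qed

lemma young_exp:
  assumes W: "W > 0" and y: "y > 0"
  shows "exp (S\<^sup>2 / (3 * W)) \<le> (2/3) * (sqrt (y / W) * exp (S\<^sup>2 / (2 * W))) + (1/3) * (W / y)"
proof -
  define G where "G = sqrt (y / W) * exp (S\<^sup>2 / (2 * W))"
  define W2 where "W2 = W / y"
  have G: "G > 0" unfolding G_def using W y by simp
  have W2: "W2 > 0" unfolding W2_def using W y by simp
  have Y: "G powr (2/3) * W2 powr (1/3) \<le> (2/3) * G + (1/3) * W2"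
    using Youngs_inequality_0[of "2/3" "1/3" G W2] G W2 by simp
  have lnG: "ln G = (ln y - ln W) / 2 + S\<^sup>2 / (2 * W)"
    unfolding G_def using W y by (simp add: ln_mult ln_sqrt ln_div)
  have lnW2: "ln W2 = ln W - ln y" unfolding W2_def using W y by (simp add: ln_div)
  have "G powr (2/3) * W2 powr (1/3) = exp ((2/3) * ln G + (1/3) * ln W2)"
    using G W2 by (simp add: powr_def exp_add)
  also have "(2/3) * ln G + (1/3) * ln W2 = S\<^sup>2 / (3 * W)"
    unfolding lnG lnW2 using W by (simp add: field_simps)
  finally show ?thesis using Y unfolding G_def W2_def by simp
qed


lemma conc:
  fixes P :: "'a measure" and Z :: "'a \<Rightarrow> real"
  assumes P: "prob_space P" and Zm[measurable]: "Z \<in> borel_measurable P" and Z2: "integrable P (\<lambda>z. (Z z)\<^sup>2)"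
    and N: "N \<ge> 1" and ew: "(\<integral>z. (Z z)\<^sup>2 \<partial>P) \<le> w" and w: "w > 0" and L: "L > 0"
  shows "emeasure (PiM {1..N} (\<lambda>_. P)) {X \<in> space (PiM {1..N} (\<lambda>_. P)).
           ((\<Sum>i\<in>{1..N}. Z (X i)) - real N * (\<integral>z. Z z \<partial>P))\<^sup>2 > 4 * L * ((\<Sum>i\<in>{1..N}. (Z (X i))\<^sup>2) + real N * w)}
         \<le> ennreal (3 * exp (- L))"
proof -
  interpret P: prob_space P by fact
  define I where "I = {1..N}"
  have I: "finite I" "card I = N" unfolding I_def by auto
  define Q where "Q = PiM I (\<lambda>_. P)"
  have Qp: "prob_space Q" unfolding Q_def by (rule prob_space_PiM) (simp add: P)
  interpret Q: prob_space Q by fact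
  define \<mu> where "\<mu> = (\<integral>z. Z z \<partial>P)"
  define e where "e = (\<integral>z. (Z z)\<^sup>2 \<partial>P)"
  have e0: "e \<ge> 0" unfolding e_def by simp
  define S where "S = (\<lambda>X. (\<Sum>i\<in>I. Z (X i)) - real N * \<mu>)"
  define SQ where "SQ = (\<lambda>X. \<Sum>i\<in>I. (Z (X i))\<^sup>2)"
  define V where "V = (\<lambda>X. SQ X + real N * e)"
  have Sm[measurable]: "S \<in> borel_measurable Q" unfolding S_def Q_def by measurable
  have SQm[measurable]: "SQ \<in> borel_measurable Q" unfolding SQ_def Q_def by measurable
  have Vm[measurable]: "V \<in> borel_measurable Q" unfolding V_def by measurable
  have SQ0: "SQ X \<ge> 0" for X unfolding SQ_def by (simp add: sum_nonneg)
  have V0: "V X \<ge> 0" for X unfolding V_def using SQ0[of X] e0 by simp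
  define y where "y = real N * w / 3"
  have y: "y > 0" unfolding y_def using N w by simp
  have H: "(\<integral>\<^sup>+ X. ennreal (exp (t * S X - t\<^sup>2 * V X / 2)) \<partial>Q) \<le> 1" for t
    using prod_bound[OF P Zm Z2 I(1), of t] unfolding S_def V_def SQ_def Q_def \<mu>_def e_def I(2) .
  define G where "G = (\<lambda>X. sqrt (y / (V X + y)) * exp ((S X)\<^sup>2 / (2 * (V X + y))))"
  have Gm[measurable]: "G \<in> borel_measurable Q" unfolding G_def by measurable
  have G0: "G X \<ge> 0" for X unfolding G_def using V0[of X] y by simp
  have MB: "(\<integral>\<^sup>+ X. ennreal (G X) \<partial>Q) \<le> 1"
    unfolding G_def by (rule mixture_bound[OF Qp Sm Vm V0 y H])
  define W2 where "W2 = (\<lambda>X. (V X + y) / y)"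
  have W2m[measurable]: "W2 \<in> borel_measurable Q" unfolding W2_def by measurable
  have W20: "W2 X \<ge> 0" for X unfolding W2_def using V0[of X] y by simp
  have comp: "integrable Q (\<lambda>X. (Z (X i))\<^sup>2) \<and> (\<integral>X. (Z (X i))\<^sup>2 \<partial>Q) = e" if i: "i \<in> I" for i
  proof -
    have D: "distr Q P (\<lambda>\<omega>. \<omega> i) = P" unfolding Q_def using distr_PiM_component[of I "\<lambda>_. P" i] i P by simp
    have T: "(\<lambda>\<omega>. \<omega> i) \<in> measurable Q P" unfolding Q_def using i by measurable
    have "integrable (distr Q P (\<lambda>\<omega>. \<omega> i)) (\<lambda>z. (Z z)\<^sup>2)" using D Z2 by simp
    then have "integrable Q (\<lambda>X. (Z (X i))\<^sup>2)" using integrable_distr_eq[OF T, of "\<lambda>z. (Z z)\<^sup>2"] by simp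
    moreover have "(\<integral>X. (Z (X i))\<^sup>2 \<partial>Q) = e"
      using integral_distr[OF T, of "\<lambda>z. (Z z)\<^sup>2"] D unfolding e_def by simp
    ultimately show ?thesis by simp
  qed
  have SQi: "integrable Q SQ" unfolding SQ_def using comp by (intro Bochner_Integration.integrable_sum) auto
  have SQint: "(\<integral>X. SQ X \<partial>Q) = real N * e"
    unfolding SQ_def using comp I by (subst Bochner_Integration.integral_sum) auto
  have W2i: "integrable Q W2" unfolding W2_def V_def using SQi by auto
  have W2int: "(\<integral>X. W2 X \<partial>Q) = (2 * real N * e + y) / y"
    unfolding W2_def V_def using SQi SQint by (simp add: Q.prob_space)
  have EW: "(\<integral>\<^sup>+ X. ennreal (W2 X) \<partial>Q) \<le> 7"
  proof -
    have "(\<integral>\<^sup>+ X. ennreal (W2 X) \<partial>Q) = ennreal ((2 * real N * e + y) / y)"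
      using nn_integral_eq_integral[OF W2i] W20 W2int by simp
    also have "(2 * real N * e + y) / y \<le> 7"
    proof -
      have "2 * real N * e \<le> 2 * real N * w" using ew N unfolding e_def by simp
      then have "2 * real N * e + y \<le> 7 * y" unfolding y_def by (simp add: mult.commute)
      then show ?thesis using y by (simp add: field_simps)
    qed
    then have "ennreal ((2 * real N * e + y) / y) \<le> ennreal 7" by (rule ennreal_leI)
    finally show ?thesis by simp
  qed
  define B where "B = {X \<in> space Q. (S X)\<^sup>2 > 4 * L * (SQ X + real N * w)}"
  have Bm: "B \<in> sets Q" unfolding B_def by measurable
  have key: "indicator B X \<le> ennreal (exp (- L) * ((2/3) * G X + (1/3) * W2 X))" for X
  proof (cases "X \<in> B")
    case True
    then have SX: "(S X)\<^sup>2 > 4 * L * (SQ X + real N * w)" unfolding B_def by simp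
    define W where "W = V X + y"
    have W: "W > 0" unfolding W_def using V0[of X] y by simp
    have "3 * L * W = 3 * L * SQ X + L * (3 * real N * e + real N * w)"
      unfolding W_def V_def y_def by (simp add: algebra_simps)
    also have "\<dots> \<le> 3 * L * SQ X + L * (4 * real N * w)"
      using ew N L unfolding e_def by (intro add_left_mono mult_left_mono) auto
    also have "\<dots> \<le> 4 * L * (SQ X + real N * w)" using SQ0[of X] L by (simp add: algebra_simps)
    finally have "3 * L * W \<le> (S X)\<^sup>2" using SX by simp
    then have "L \<le> (S X)\<^sup>2 / (3 * W)" using W by (simp add: field_simps)
    then have "exp L \<le> exp ((S X)\<^sup>2 / (3 * W))" by simp
    also have "\<dots> \<le> (2/3) * G X + (1/3) * W2 X"
      using young_exp[OF W y, of "S X"] unfolding G_def W2_def W_def by simp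
    finally have "exp (- L) * exp L \<le> exp (- L) * ((2/3) * G X + (1/3) * W2 X)" by simp
    then have "1 \<le> exp (- L) * ((2/3) * G X + (1/3) * W2 X)" by (simp add: exp_minus field_simps)
    then show ?thesis using True by (simp add: ennreal_leI)
  next
    case False
    then show ?thesis by simp
  qed
  have "emeasure Q B = (\<integral>\<^sup>+ X. indicator B X \<partial>Q)" using Bm by simp
  also have "\<dots> \<le> (\<integral>\<^sup>+ X. ennreal (exp (- L) * ((2/3) * G X + (1/3) * W2 X)) \<partial>Q)"
    by (intro nn_integral_mono key)
  also have "\<dots> = (\<integral>\<^sup>+ X. ennreal (exp (- L)) * (ennreal (2/3) * ennreal (G X) + ennreal (1/3) * ennreal (W2 X)) \<partial>Q)"
  proof (rule nn_integral_cong)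
    fix X
    show "ennreal (exp (- L) * ((2/3) * G X + (1/3) * W2 X)) = ennreal (exp (- L)) * (ennreal (2/3) * ennreal (G X) + ennreal (1/3) * ennreal (W2 X))"
      using G0[of X] W20[of X] by (simp add: ennreal_mult[symmetric] ennreal_plus[symmetric] del: ennreal_plus)
  qed
  also have "\<dots> = ennreal (exp (- L)) * (ennreal (2/3) * (\<integral>\<^sup>+ X. ennreal (G X) \<partial>Q) + ennreal (1/3) * (\<integral>\<^sup>+ X. ennreal (W2 X) \<partial>Q))"
    by (simp add: nn_integral_cmult nn_integral_add)
  also have "\<dots> \<le> ennreal (exp (- L)) * (ennreal (2/3) * 1 + ennreal (1/3) * 7)"
    using MB EW by (intro mult_left_mono add_mono) auto
  also have "\<dots> = ennreal (3 * exp (- L))"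
  proof -
    have a: "ennreal (1/3) * 7 = ennreal (7/3)"
      using ennreal_mult[of "1/3" 7] by simp
    have b: "ennreal (2/3) + ennreal (7/3) = ennreal 3"
      using ennreal_plus[of "2/3" "7/3"] by simp
    have c: "ennreal (exp (- L)) * ennreal 3 = ennreal (3 * exp (- L))"
      using ennreal_mult[of "exp (- L)" 3] by (simp add: mult.commute)
    show ?thesis using a b c by simp
  qed
  finally show ?thesis unfolding B_def Q_def I_def S_def SQ_def \<mu>_def by simp
qed

lemma f_int:
  assumes fm: "f \<in> borel_measurable M" and f0: "\<forall>x\<in>space M. f x \<ge> 0" and P: "prob_space (density M f)"
  shows "integrable M f \<and> (\<integral>x. f x \<partial>M) = 1"
proof -
  have "emeasure (density M f) (space M) = 1" using prob_space.emeasure_space_1[OF P] by simp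
  then have "(\<integral>\<^sup>+ x. ennreal (f x) * indicator (space M) x \<partial>M) = 1" using fm by (simp add: emeasure_density)
  moreover have "(\<integral>\<^sup>+ x. ennreal (f x) * indicator (space M) x \<partial>M) = (\<integral>\<^sup>+ x. ennreal (f x) \<partial>M)"
    by (rule nn_integral_cong) simp
  ultimately have nn: "(\<integral>\<^sup>+ x. ennreal (f x) \<partial>M) = ennreal 1" by simp
  have AE0: "AE x in M. 0 \<le> f x" using f0 by (intro AE_I') auto
  have int: "integrable M f" using integrableI_nn_integral_finite[OF fm AE0 nn] .
  have "ennreal (\<integral>x. f x \<partial>M) = ennreal 1" using nn_integral_eq_integral[OF int AE0] nn by simp
  then have "(\<integral>x. f x \<partial>M) = 1" using integral_nonneg_AE[OF AE0] by simp
  with int show ?thesis by simp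
qed

lemma moment_bound_gen:
  assumes fm: "f \<in> borel_measurable M" and f0: "\<forall>x\<in>space M. f x \<ge> 0" and fkL: "fk \<in> L2 M"
    and bd: "integrable M bd" and pw: "\<And>x. x \<in> space M \<Longrightarrow> f x * (fk x)\<^sup>2 \<le> bd x"
  shows "integrable M (\<lambda>x. f x * (fk x)\<^sup>2) \<and> (\<integral>x. f x * (fk x)\<^sup>2 \<partial>M) \<le> (\<integral>x. bd x \<partial>M)"
proof -
  have fkm: "fk \<in> borel_measurable M" using fkL unfolding L2_def by simp
  have meas: "(\<lambda>x. f x * (fk x)\<^sup>2) \<in> borel_measurable M" using fm fkm by measurable
  have AEb: "AE x in M. norm (f x * (fk x)\<^sup>2) \<le> norm (bd x)"
  proof -
    have "norm (f x * (fk x)\<^sup>2) \<le> norm (bd x)" if x: "x \<in> space M" for x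
    proof -
      have "0 \<le> f x * (fk x)\<^sup>2" "f x * (fk x)\<^sup>2 \<le> bd x" using f0 pw x by auto
      then show ?thesis by simp
    qed
    then show ?thesis by (intro AE_I'[of "{}"]) auto
  qed
  have int: "integrable M (\<lambda>x. f x * (fk x)\<^sup>2)"
    by (rule Bochner_Integration.integrable_bound[OF bd meas AEb])
  have "(\<integral>x. f x * (fk x)\<^sup>2 \<partial>M) \<le> (\<integral>x. bd x \<partial>M)"
    using int bd pw by (intro integral_mono) auto
  with int show ?thesis by simp
qed

lemma moment_p1:
  assumes fm: "f \<in> borel_measurable M" and f0: "\<forall>x\<in>space M. f x \<ge> 0" and fkL: "fk \<in> L2 M"
    and fc: "\<forall>x\<in>space M. f x \<le> c"
  shows "integrable M (\<lambda>x. f x * (fk x)\<^sup>2) \<and> (\<integral>x. f x * (fk x)\<^sup>2 \<partial>M) \<le> c * Dk M fk"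
proof -
  have i2: "integrable M (\<lambda>x. (fk x)\<^sup>2)" using fkL unfolding L2_def by simp
  have "integrable M (\<lambda>x. f x * (fk x)\<^sup>2) \<and> (\<integral>x. f x * (fk x)\<^sup>2 \<partial>M) \<le> (\<integral>x. c * (fk x)\<^sup>2 \<partial>M)"
  proof (rule moment_bound_gen[OF fm f0 fkL])
    show "integrable M (\<lambda>x. c * (fk x)\<^sup>2)" using i2 by simp
    fix x assume "x \<in> space M"
    then show "f x * (fk x)\<^sup>2 \<le> c * (fk x)\<^sup>2" using fc by (intro mult_right_mono) auto
  qed
  then show ?thesis unfolding Dk_def by simp
qed

lemma moment_inf:
  assumes fm: "f \<in> borel_measurable M" and f0: "\<forall>x\<in>space M. f x \<ge> 0" and fkL: "fk \<in> L2 M"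
    and P: "prob_space (density M f)"
    and fkb: "\<forall>x\<in>space M. \<bar>fk x\<bar> \<le> sqrt (ck * Dk M fk)" and ck: "ck > 0" and D: "Dk M fk > 0"
  shows "integrable M (\<lambda>x. f x * (fk x)\<^sup>2) \<and> (\<integral>x. f x * (fk x)\<^sup>2 \<partial>M) \<le> ck * Dk M fk"
proof -
  have fi: "integrable M f" "(\<integral>x. f x \<partial>M) = 1" using f_int[OF fm f0 P] by auto
  have "integrable M (\<lambda>x. f x * (fk x)\<^sup>2) \<and> (\<integral>x. f x * (fk x)\<^sup>2 \<partial>M) \<le> (\<integral>x. (ck * Dk M fk) * f x \<partial>M)"
  proof (rule moment_bound_gen[OF fm f0 fkL])
    show "integrable M (\<lambda>x. (ck * Dk M fk) * f x)" using fi by simp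
    fix x assume x: "x \<in> space M"
    have "\<bar>fk x\<bar>\<^sup>2 \<le> (sqrt (ck * Dk M fk))\<^sup>2" using fkb x by (intro power_mono) auto
    then have "(fk x)\<^sup>2 \<le> ck * Dk M fk" using ck D by simp
    then have "f x * (fk x)\<^sup>2 \<le> f x * (ck * Dk M fk)" using f0 x by (intro mult_left_mono) auto
    then show "f x * (fk x)\<^sup>2 \<le> (ck * Dk M fk) * f x" by (simp add: mult.commute)
  qed
  then show ?thesis using fi by simp
qed

lemma sq_powr: "(a::real)\<^sup>2 powr p = \<bar>a\<bar> powr (2 * p)"
proof (cases "a = 0")
  case True then show ?thesis by simp
next
  case False
  then have "a\<^sup>2 = \<bar>a\<bar> powr 2" by (simp add: powr_numeral)
  then have "a\<^sup>2 powr p = (\<bar>a\<bar> powr 2) powr p" by simp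
  also have "\<dots> = \<bar>a\<bar> powr (2 * p)" by (simp only: powr_powr)
  finally show ?thesis .
qed

lemma moment_mid:
  assumes fm: "f \<in> borel_measurable M" and f0: "\<forall>x\<in>space M. f x \<ge> 0" and fkL: "fk \<in> L2 M"
    and p: "p > 1" and q: "q = p / (p - 1)" and A: "A > 0" and B: "B > 0"
    and i1: "integrable M (\<lambda>x. \<bar>fk x\<bar> powr (2 * p))" and h1: "(\<integral>x. \<bar>fk x\<bar> powr (2 * p) \<partial>M) powr (1 / p) \<le> A"
    and i2: "integrable M (\<lambda>x. \<bar>f x\<bar> powr q)" and h2: "(\<integral>x. \<bar>f x\<bar> powr q \<partial>M) powr (1 / q) \<le> B"
  shows "integrable M (\<lambda>x. f x * (fk x)\<^sup>2) \<and> (\<integral>x. f x * (fk x)\<^sup>2 \<partial>M) \<le> A * B"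
proof -
  have q1: "q > 1" unfolding q using p by (simp add: field_simps)
  have pq: "1 / p + 1 / q = 1" unfolding q using p by (simp add: field_simps)
  define bd where "bd = (\<lambda>x. A * B * (\<bar>fk x\<bar> powr (2 * p) / (p * A powr p) + \<bar>f x\<bar> powr q / (q * B powr q)))"
  have bdi: "integrable M bd" unfolding bd_def using i1 i2 by (simp add: add_divide_distrib)
  define I1 where "I1 = (\<integral>x. \<bar>fk x\<bar> powr (2 * p) \<partial>M)"
  define I2 where "I2 = (\<integral>x. \<bar>f x\<bar> powr q \<partial>M)"
  have I1: "I1 \<ge> 0" "I1 \<le> A powr p"
  proof -
    show "I1 \<ge> 0" unfolding I1_def by simp
    then have "I1 = (I1 powr (1 / p)) powr p" using p by (simp add: powr_powr)
    also have "\<dots> \<le> A powr p" using h1 p unfolding I1_def by (intro powr_mono2) auto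
    finally show "I1 \<le> A powr p" .
  qed
  have I2: "I2 \<ge> 0" "I2 \<le> B powr q"
  proof -
    show "I2 \<ge> 0" unfolding I2_def by simp
    then have "I2 = (I2 powr (1 / q)) powr q" using q1 by (simp add: powr_powr)
    also have "\<dots> \<le> B powr q" using h2 q1 unfolding I2_def by (intro powr_mono2) auto
    finally show "I2 \<le> B powr q" .
  qed
  have Ap: "A powr p > 0" "B powr q > 0" using A B by auto
  have "integrable M (\<lambda>x. f x * (fk x)\<^sup>2) \<and> (\<integral>x. f x * (fk x)\<^sup>2 \<partial>M) \<le> (\<integral>x. bd x \<partial>M)"
  proof (rule moment_bound_gen[OF fm f0 fkL bdi])
    fix x assume x: "x \<in> space M"
    define a where "a = (fk x)\<^sup>2 / A"
    define b where "b = f x / B"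
    have a: "a \<ge> 0" unfolding a_def using A by simp
    have b: "b \<ge> 0" unfolding b_def using B f0 x by simp
    have Y: "a * b \<le> a powr p / p + b powr q / q" by (rule Youngs_inequality[OF p q1 pq a b])
    have ap: "a powr p = \<bar>fk x\<bar> powr (2 * p) / A powr p"
      unfolding a_def using A by (simp add: powr_divide sq_powr)
    have bp: "b powr q = \<bar>f x\<bar> powr q / B powr q"
      unfolding b_def using B f0 x by (simp add: powr_divide)
    have "f x * (fk x)\<^sup>2 = A * B * (a * b)" unfolding a_def b_def using A B by (simp add: field_simps)
    also have "\<dots> \<le> A * B * (a powr p / p + b powr q / q)" using Y A B by simp
    also have "\<dots> = bd x" unfolding bd_def ap bp by (simp add: field_simps)
    finally show "f x * (fk x)\<^sup>2 \<le> bd x" .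
  qed
  moreover have "(\<integral>x. bd x \<partial>M) \<le> A * B"
  proof -
    have "(\<integral>x. bd x \<partial>M) = A * B * (I1 / (p * A powr p) + I2 / (q * B powr q))"
      unfolding bd_def I1_def I2_def using i1 i2 by (simp add: add_divide_distrib)
    also have "\<dots> \<le> A * B * (A powr p / (p * A powr p) + B powr q / (q * B powr q))"
      using I1 I2 A B Ap p q1 by (intro mult_left_mono add_mono divide_right_mono) auto
    also have "\<dots> = A * B * (1 / p + 1 / q)" using Ap p q1 by simp
    also have "\<dots> = A * B" using pq by simp
    finally show ?thesis .
  qed
  ultimately show ?thesis by simp
qed

lemma good_iff:
  assumes D: "Dk M fk > 0" and N: "N \<ge> 1"
  shows "(alpha_hat M fk N X - cf M fk f)\<^sup>2 * Dk M fk \<le> beta M fk m Ck eps N X \<longleftrightarrow>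
    ((\<Sum>i\<in>{1..N}. fk (X i)) - real N * (\<integral>y. f y * fk y \<partial>M))\<^sup>2
      \<le> 4 * (1 + ln (2 * real m / eps)) * ((\<Sum>i\<in>{1..N}. (fk (X i))\<^sup>2) + real N * (Ck * Dk M fk))"
proof -
  define T where "T = (\<Sum>i\<in>{1..N}. fk (X i))"
  define Qs where "Qs = (\<Sum>i\<in>{1..N}. (fk (X i))\<^sup>2)"
  define \<mu> where "\<mu> = (\<integral>y. f y * fk y \<partial>M)"
  define L where "L = 1 + ln (2 * real m / eps)"
  define Dd where "Dd = Dk M fk"
  have Dd: "Dd > 0" using D unfolding Dd_def .
  have Np: "real N > 0" using N by simp
  have c: "(real N)\<^sup>2 * Dd > 0" using Dd Np by simp
  have e1: "(alpha_hat M fk N X - cf M fk f)\<^sup>2 * Dd = (T - real N * \<mu>)\<^sup>2 / ((real N)\<^sup>2 * Dd)"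
  proof -
    have a: "alpha_hat M fk N X - cf M fk f = (T - real N * \<mu>) / (real N * Dd)"
      unfolding alpha_hat_def cf_def T_def \<mu>_def Dd_def using Np Dd unfolding Dd_def
      by (simp add: field_simps)
    show ?thesis unfolding a using Np Dd by (simp add: power2_eq_square field_simps)
  qed
  have e2: "beta M fk m Ck eps N X = 4 * L * (Qs + real N * (Ck * Dd)) / ((real N)\<^sup>2 * Dd)"
    unfolding beta_def L_def Qs_def Dd_def using Np Dd unfolding Dd_def
    by (simp add: power2_eq_square field_simps)
  show ?thesis unfolding Dd_def[symmetric] T_def[symmetric] Qs_def[symmetric] \<mu>_def[symmetric] L_def[symmetric]
    unfolding e1 e2
    using c by (simp add: divide_le_cancel)
qed


lemma per_k:
  fixes M :: "'a measure" and f fk :: "'a \<Rightarrow> real"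
  assumes fm: "f \<in> borel_measurable M" and f0: "\<forall>x\<in>space M. f x \<ge> 0"
    and PP: "prob_space (density M f)" and fL: "f \<in> L2 M" and N: "N \<ge> 1"
    and fkL: "fk \<in> L2 M" and D: "Dk M fk > 0" and Ck: "Ck > 0"
    and mom: "integrable M (\<lambda>x. f x * (fk x)\<^sup>2)" "(\<integral>x. f x * (fk x)\<^sup>2 \<partial>M) \<le> Ck * Dk M fk"
    and m: "m \<ge> 1" and eps: "0 < eps" "eps < 1"
  defines "Q \<equiv> PiM {1..N} (\<lambda>_. density M f)" and "L \<equiv> 1 + ln (2 * real m / eps)"
  defines "Bad \<equiv> {X \<in> space Q. ((\<Sum>i\<in>{1..N}. fk (X i)) - real N * (\<integral>z. fk z \<partial>density M f))\<^sup>2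
              > 4 * L * ((\<Sum>i\<in>{1..N}. (fk (X i))\<^sup>2) + real N * (Ck * Dk M fk))}"
  shows "Bad \<in> sets Q" "measure Q Bad \<le> 3 * exp (- L)"
    "\<And>X. X \<in> space Q \<Longrightarrow> (\<forall>g\<in>L2 M. d2 M (metric_proj M (CR M fk m Ck eps N X) g) f
            \<le> d2 M g f - d2 M (metric_proj M (CR M fk m Ck eps N X) g) g) \<longleftrightarrow> X \<notin> Bad"
proof -
  have fkm: "fk \<in> borel_measurable M" using fkL unfolding L2_def by simp
  have fkm'[measurable]: "fk \<in> borel_measurable (density M f)" using fkm by simp
  have AE0: "AE x in M. 0 \<le> f x" using f0 by (intro AE_I'[of "{}"]) auto
  have Z2: "integrable (density M f) (\<lambda>z. (fk z)\<^sup>2)"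
    using mom(1) by (subst integrable_density[OF _ fm AE0]) auto
  have Z2v: "(\<integral>z. (fk z)\<^sup>2 \<partial>density M f) = (\<integral>x. f x * (fk x)\<^sup>2 \<partial>M)"
    using integral_density[OF _ fm AE0, of "\<lambda>z. (fk z)\<^sup>2"] by simp
  have mu: "(\<integral>z. fk z \<partial>density M f) = (\<integral>y. f y * fk y \<partial>M)"
    using integral_density[OF fkm fm AE0] by simp
  have L: "L > 0"
  proof -
    have "2 * real m / eps > 1" using m eps by (simp add: field_simps)
    then have "ln (2 * real m / eps) > 0" by simp
    then show ?thesis unfolding L_def by simp
  qed
  have w: "Ck * Dk M fk > 0" using Ck D by simp
  show "Bad \<in> sets Q" unfolding Bad_def Q_def by measurable
  have "emeasure Q Bad \<le> ennreal (3 * exp (- L))"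
    unfolding Bad_def Q_def
    by (rule conc[OF PP fkm' Z2 N _ w L]) (simp add: Z2v mom(2))
  moreover have "prob_space Q" unfolding Q_def by (rule prob_space_PiM) (simp add: PP)
  then interpret QQ: prob_space Q .
  from calculation show "measure Q Bad \<le> 3 * exp (- L)"
    by (simp add: QQ.emeasure_eq_measure ennreal_le_iff)
  fix X assume X: "X \<in> space Q"
  have b0: "beta M fk m Ck eps N X \<ge> 0"
  proof -
    have "(\<Sum>i\<in>{1..N}. (fk (X i))\<^sup>2) \<ge> 0" by (simp add: sum_nonneg)
    then have hB: "((1 / real N) * (\<Sum>i\<in>{1..N}. (fk (X i))\<^sup>2)) / Dk M fk + Ck \<ge> 0" using D Ck by simp
    have hA: "4 * (1 + ln (2 * real m / eps)) / real N \<ge> 0" using L unfolding L_def by simp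
    show ?thesis unfolding beta_def by (rule mult_nonneg_nonneg[OF hA hB])
  qed
  have s1: "(\<forall>g\<in>L2 M. d2 M (metric_proj M (CR M fk m Ck eps N X) g) f
            \<le> d2 M g f - d2 M (metric_proj M (CR M fk m Ck eps N X) g) g)
      \<longleftrightarrow> f \<in> slab M fk (alpha_hat M fk N X) (beta M fk m Ck eps N X)"
    unfolding CR_slab by (rule event_iff[OF fkL D b0 fL])
  have s2: "f \<in> slab M fk (alpha_hat M fk N X) (beta M fk m Ck eps N X)
     \<longleftrightarrow> (alpha_hat M fk N X - cf M fk f)\<^sup>2 * Dk M fk \<le> beta M fk m Ck eps N X"
    using fL by (simp add: slab_iff)
  have s3: "(alpha_hat M fk N X - cf M fk f)\<^sup>2 * Dk M fk \<le> beta M fk m Ck eps N X \<longleftrightarrow> X \<notin> Bad"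
    unfolding good_iff[OF D N] Bad_def L_def mu using X by auto
  show "(\<forall>g\<in>L2 M. d2 M (metric_proj M (CR M fk m Ck eps N X) g) f
            \<le> d2 M g f - d2 M (metric_proj M (CR M fk m Ck eps N X) g) g) \<longleftrightarrow> X \<notin> Bad"
    using s1 s2 s3 by blast
qed

theorem corollary3:
  fixes M :: "'a measure" and f :: "'a \<Rightarrow> real" and fs :: "nat \<Rightarrow> 'a \<Rightarrow> real"
    and N m :: nat and p :: ereal and c eps :: real and cs :: "nat \<Rightarrow> real"
  assumes "sigma_finite_measure M"
    and "f \<in> borel_measurable M" and "\<forall>x\<in>space M. f x \<ge> 0"
    and "prob_space (density M f)"
    and "f \<in> L2 M"
    and "N \<ge> 1"
    and "\<forall>k\<in>{1..m}. fs k \<in> L2 M \<and> Dk M (fs k) > 0"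
    and "1 \<le> p"
    and "cond_H M f fs m p c cs"
    and "eps > 0"
  shows "measure (PiM {1..N} (\<lambda>_. density M f))
           {X \<in> space (PiM {1..N} (\<lambda>_. density M f)).
              \<forall>k\<in>{1..m}. \<forall>g\<in>L2 M.
                d2 M (metric_proj M (CR M (fs k) m (cs k * c) eps N X) g) f
                  \<le> d2 M g f - d2 M (metric_proj M (CR M (fs k) m (cs k * c) eps N X) g) g}
         \<ge> 1 - eps"
proof (cases "eps \<ge> 1")
  case True
  have "measure (PiM {1..N} (\<lambda>_. density M f))
           {X \<in> space (PiM {1..N} (\<lambda>_. density M f)).
              \<forall>k\<in>{1..m}. \<forall>g\<in>L2 M.
                d2 M (metric_proj M (CR M (fs k) m (cs k * c) eps N X) g) f
                  \<le> d2 M g f - d2 M (metric_proj M (CR M (fs k) m (cs k * c) eps N X) g) g} \<ge> 0"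
    by (rule measure_nonneg)
  then show ?thesis using True by linarith
next
  case False
  then have eps1: "eps < 1" by simp
  have eps0: "eps > 0" by fact
  have fm: "f \<in> borel_measurable M" and f0: "\<forall>x\<in>space M. f x \<ge> 0" and PP: "prob_space (density M f)"
    and fL: "f \<in> L2 M" and N: "N \<ge> 1" using assms by auto
  have cH: "c > 0" "\<And>k. k \<in> {1..m} \<Longrightarrow> cs k > 0" using assms(9) unfolding cond_H_def by auto
  have mom: "integrable M (\<lambda>x. f x * (fs k x)\<^sup>2) \<and> (\<integral>x. f x * (fs k x)\<^sup>2 \<partial>M) \<le> (cs k * c) * Dk M (fs k)"
    if k: "k \<in> {1..m}" for k
  proof -
    have fkL: "fs k \<in> L2 M" and D: "Dk M (fs k) > 0" using assms(7) k by auto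
    have ck: "cs k > 0" using cH k by auto
    show ?thesis
    proof (cases "p = 1")
      case True
      then have "\<forall>x\<in>space M. f x \<le> c" "cs k = 1" using assms(9) k unfolding cond_H_def by auto
      then show ?thesis using moment_p1[OF fm f0 fkL] by simp
    next
      case p1: False
      show ?thesis
      proof (cases "p = \<infinity>")
        case True
        then have "\<forall>x\<in>space M. \<bar>fs k x\<bar> \<le> sqrt (cs k * Dk M (fs k))" "c = 1"
          using assms(9) k p1 unfolding cond_H_def by auto
        then show ?thesis using moment_inf[OF fm f0 fkL PP _ ck D] by simp
      next
        case pinf: False
        define p' where "p' = real_of_ereal p"
        define q where "q = p' / (p' - 1)"
        have H: "integrable M (\<lambda>x. \<bar>fs k x\<bar> powr (2 * p'))"
          "(\<integral>x. \<bar>fs k x\<bar> powr (2 * p') \<partial>M) powr (1 / p') \<le> cs k * Dk M (fs k)"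
          "integrable M (\<lambda>x. \<bar>f x\<bar> powr q)" "(\<integral>x. \<bar>f x\<bar> powr q \<partial>M) powr (1 / q) \<le> c"
          using assms(9) k p1 pinf unfolding cond_H_def Let_def p'_def q_def by auto
        obtain r where r: "p = ereal r" using pinf assms(8) by (cases p) auto
        have p'1: "p' > 1" using r p1 assms(8) unfolding p'_def by auto
        have A: "cs k * Dk M (fs k) > 0" using ck D by simp
        have "integrable M (\<lambda>x. f x * (fs k x)\<^sup>2) \<and> (\<integral>x. f x * (fs k x)\<^sup>2 \<partial>M) \<le> (cs k * Dk M (fs k)) * c"
          by (rule moment_mid[OF fm f0 fkL p'1 q_def A cH(1) H])
        then show ?thesis by (simp add: mult_ac)
      qed
    qed
  qed
  define L where "L = 1 + ln (2 * real m / eps)"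
  define Q where "Q = PiM {1..N} (\<lambda>_. density M f)"
  define Bad where "Bad = (\<lambda>k. {X \<in> space Q. ((\<Sum>i\<in>{1..N}. fs k (X i)) - real N * (\<integral>z. fs k z \<partial>density M f))\<^sup>2
              > 4 * L * ((\<Sum>i\<in>{1..N}. (fs k (X i))\<^sup>2) + real N * (cs k * c * Dk M (fs k)))})"
  have Qp: "prob_space Q" unfolding Q_def by (rule prob_space_PiM) (simp add: PP)
  interpret Q: prob_space Q by fact
  have per: "Bad k \<in> sets Q \<and> measure Q (Bad k) \<le> 3 * exp (- L) \<and>
      (\<forall>X\<in>space Q. (\<forall>g\<in>L2 M. d2 M (metric_proj M (CR M (fs k) m (cs k * c) eps N X) g) f
            \<le> d2 M g f - d2 M (metric_proj M (CR M (fs k) m (cs k * c) eps N X) g) g) \<longleftrightarrow> X \<notin> Bad k)"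
    if k: "k \<in> {1..m}" for k
  proof -
    have fkL: "fs k \<in> L2 M" and D: "Dk M (fs k) > 0" using assms(7) k by auto
    have Ck: "cs k * c > 0" using cH k by simp
    have m: "m \<ge> 1" using k by simp
    note P = per_k[OF fm f0 PP fL N fkL D Ck mom[OF k, THEN conjunct1] mom[OF k, THEN conjunct2] m eps0 eps1]
    show ?thesis using P unfolding Q_def[symmetric] L_def[symmetric] Bad_def by blast
  qed
  define U where "U = (\<Union>k\<in>{1..m}. Bad k)"
  have U: "U \<in> sets Q" unfolding U_def using per by auto
  have eq: "{X \<in> space Q. \<forall>k\<in>{1..m}. \<forall>g\<in>L2 M.
                d2 M (metric_proj M (CR M (fs k) m (cs k * c) eps N X) g) f
                  \<le> d2 M g f - d2 M (metric_proj M (CR M (fs k) m (cs k * c) eps N X) g) g} = space Q - U"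
  proof (rule set_eqI)
    fix X
    have iff: "\<And>k. k \<in> {1..m} \<Longrightarrow> X \<in> space Q \<Longrightarrow> (\<forall>g\<in>L2 M. d2 M (metric_proj M (CR M (fs k) m (cs k * c) eps N X) g) f
            \<le> d2 M g f - d2 M (metric_proj M (CR M (fs k) m (cs k * c) eps N X) g) g) \<longleftrightarrow> X \<notin> Bad k"
      using per by blast
    show "X \<in> {X \<in> space Q. \<forall>k\<in>{1..m}. \<forall>g\<in>L2 M.
                d2 M (metric_proj M (CR M (fs k) m (cs k * c) eps N X) g) f
                  \<le> d2 M g f - d2 M (metric_proj M (CR M (fs k) m (cs k * c) eps N X) g) g} \<longleftrightarrow> X \<in> space Q - U"
    proof (cases "X \<in> space Q")
      case True
      then have "(\<forall>k\<in>{1..m}. \<forall>g\<in>L2 M.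
                d2 M (metric_proj M (CR M (fs k) m (cs k * c) eps N X) g) f
                  \<le> d2 M g f - d2 M (metric_proj M (CR M (fs k) m (cs k * c) eps N X) g) g) \<longleftrightarrow> (\<forall>k\<in>{1..m}. X \<notin> Bad k)"
        using iff by blast
      then show ?thesis using True unfolding U_def by blast
    next
      case False
      then show ?thesis by blast
    qed
  qed
  have "measure Q U \<le> (\<Sum>k\<in>{1..m}. measure Q (Bad k))"
    unfolding U_def by (rule Q.finite_measure_subadditive_finite) (use per in auto)
  also have "\<dots> \<le> real (card {1..m}) * (3 * exp (- L))"
    by (rule sum_bounded_above) (use per in auto)
  also have "\<dots> \<le> eps"
  proof (cases "m = 0")
    case True then show ?thesis using eps0 by simp
  next
    case False
    then have m: "real m > 0" by simp
    have "exp (- L) = exp (-1) * (eps / (2 * real m))"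
      unfolding L_def using m eps0 by (simp add: exp_diff exp_minus field_simps)
    moreover have "exp (-1) \<le> (1::real) / 2"
    proof -
      have "2 \<le> exp (1::real)" using exp_ge_add_one_self[of 1] by simp
      then show ?thesis by (simp add: exp_minus field_simps)
    qed
    ultimately have "exp (- L) \<le> (1/2) * (eps / (2 * real m))"
    proof -
      assume e: "exp (- L) = exp (-1) * (eps / (2 * real m))" and h: "exp (-1) \<le> (1::real) / 2"
      have "0 \<le> eps / (2 * real m)" using m eps0 by simp
      then show ?thesis unfolding e by (rule mult_right_mono[OF h])
    qed
    then have "real m * (3 * exp (- L)) \<le> real m * (3 * ((1/2) * (eps / (2 * real m))))"
      using m by (intro mult_left_mono) auto
    also have "\<dots> = 3 / 4 * eps" using m by (simp add: field_simps)
    finally show ?thesis using eps0 by simp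
  qed
  finally have "measure Q U \<le> eps" .
  moreover have "measure Q (space Q - U) = 1 - measure Q U" using Q.prob_compl[OF U] .
  ultimately have "measure Q (space Q - U) \<ge> 1 - eps" by simp
  then show ?thesis unfolding Q_def[symmetric] eq .
qed

end
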